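(* For every $a\ge0$, the set $\mathcal{P}^+$ is dense in $\mathcal{L}^+_a$ with respect to the topology of $\mathcal{A}_a$.
   Context: For $b>0$, $\|f\|_b=\sup_{k\in\mathbb{N}_0}b^{-k}|f^{(k)}(0)|$; $\mathcal{A}_a=\{f\text{ entire}:\|f\|_b<\infty\ \forall b>a\}$ with topology generated by $\{\|\cdot\|_b:b>a\}$. $\mathcal{L}^+$ is the set of entire functions $Cz^le^{\alpha z}\prod_{j\ge1}(1+\beta_jz)$ with $C\in\mathbb{C}$, $l\in\mathbb{N}_0$, $\alpha\ge0$, $\beta_j\ge\beta_{j+1}\ge0$, $\sum_j\beta_j<\infty$; $\mathcal{L}^+_a=\mathcal{L}^+\cap\mathcal{A}_a$; $\mathcal{P}^+$ is the set of polynomials belonging to $\mathcal{L}^+$. *)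

theory Defs
  imports "HOL-Analysis.Analysis" "HOL-Computational_Algebra.Polynomial"
begin

definition seminorm_b :: "real \<Rightarrow> (complex \<Rightarrow> complex) \<Rightarrow> ereal" where
  "seminorm_b b f = (SUP k::nat. ereal (norm ((deriv ^^ k) f 0) / b ^ k))"

definition A_space :: "real \<Rightarrow> (complex \<Rightarrow> complex) set" where
  "A_space a = {f. f holomorphic_on UNIV \<and> (\<forall>b>a. seminorm_b b f < \<infinity>)}"

text \<open>The class L^+: functions C z^l e^{\<alpha> z} \<Prod>_{j\<ge>1} (1 + \<beta>_j z) with \<alpha> \<ge> 0,
  \<beta> nonincreasing, nonnegative and summable (indices shifted to start at 0);
  the infinite product is the pointwise limit of the partial products.\<close>
definition L_plus :: "(complex \<Rightarrow> complex) set" where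
  "L_plus = {f. \<exists>(C::complex) (l::nat) (\<alpha>::real) (\<beta>::nat \<Rightarrow> real).
      \<alpha> \<ge> 0 \<and> (\<forall>j. \<beta> (Suc j) \<le> \<beta> j) \<and> (\<forall>j. \<beta> j \<ge> 0) \<and> summable \<beta> \<and>
      (\<forall>z. (\<lambda>n. C * z ^ l * exp (complex_of_real \<alpha> * z) *
               (\<Prod>j<n. 1 + complex_of_real (\<beta> j) * z)) \<longlonglongrightarrow> f z)}"

definition L_plus_a :: "real \<Rightarrow> (complex \<Rightarrow> complex) set" where
  "L_plus_a a = L_plus \<inter> A_space a"

definition P_plus :: "(complex \<Rightarrow> complex) set" where
  "P_plus = {f \<in> L_plus. \<exists>p::complex poly. f = poly p}"

end

theory Submission
  imports Defs "HOL-Complex_Analysis.Complex_Analysis" "HOL-Library.Complex_Order"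
begin


abbreviation Dk :: "nat \<Rightarrow> (complex \<Rightarrow> complex) \<Rightarrow> complex" where
  "Dk k g \<equiv> (deriv ^^ k) g 0"

definition nn :: "(complex \<Rightarrow> complex) \<Rightarrow> bool" where
  "nn g \<longleftrightarrow> g holomorphic_on UNIV \<and> (\<forall>k. 0 \<le> Dk k g)"

definition cle :: "(complex \<Rightarrow> complex) \<Rightarrow> (complex \<Rightarrow> complex) \<Rightarrow> bool" where
  "cle g h \<longleftrightarrow> (\<forall>k. Dk k g \<le> Dk k h)"

lemma cnn_of_nat[simp]: "0 \<le> (of_nat n :: complex)" by (simp add: less_eq_complex_def)
lemma cnn_one[simp]: "0 \<le> (1 :: complex)" by (simp add: less_eq_complex_def)
lemma cnn_of_real[simp]: "0 \<le> complex_of_real c \<longleftrightarrow> 0 \<le> c" by (simp add: less_eq_complex_def)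

lemma nn_mult:
  assumes "nn f" "nn g" shows "nn (\<lambda>z. f z * g z)"
proof -
  have hf: "f holomorphic_on UNIV" and hg: "g holomorphic_on UNIV" using assms by (auto simp: nn_def)
  have "0 \<le> Dk k (\<lambda>z. f z * g z)" for k
    unfolding higher_deriv_mult[OF hf hg open_UNIV UNIV_I]
    using assms unfolding nn_def
    by (intro sum_nonneg mult_nonneg_nonneg) auto
  then show ?thesis using hf hg by (auto simp: nn_def holomorphic_on_mult)
qed

lemma cle_mult:
  assumes "nn f1" "nn g1" "nn f2" "nn g2" "cle f1 f2" "cle g1 g2"
  shows "cle (\<lambda>z. f1 z * g1 z) (\<lambda>z. f2 z * g2 z)"
proof -
  have h: "f1 holomorphic_on UNIV" "g1 holomorphic_on UNIV" "f2 holomorphic_on UNIV" "g2 holomorphic_on UNIV"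
    using assms by (auto simp: nn_def)
  have "Dk k (\<lambda>z. f1 z * g1 z) \<le> Dk k (\<lambda>z. f2 z * g2 z)" for k
    unfolding higher_deriv_mult[OF h(1,2) open_UNIV UNIV_I] higher_deriv_mult[OF h(3,4) open_UNIV UNIV_I]
    using assms unfolding nn_def cle_def
    by (intro sum_mono mult_mono) auto
  then show ?thesis by (auto simp: cle_def)
qed

lemma cle_refl: "cle f f" by (simp add: cle_def)
lemma cle_trans: "cle f g \<Longrightarrow> cle g h \<Longrightarrow> cle f h" unfolding cle_def using order_trans by blast

lemma nn_const: "c \<ge> 0 \<Longrightarrow> nn (\<lambda>z. c)"
  by (auto simp: nn_def)

lemma nn_ident: "nn (\<lambda>z. z)"
  by (auto simp: nn_def)

lemma higher_deriv_lin1: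
  "(deriv ^^ n) (\<lambda>w. 1 + c*w) = (\<lambda>z. if n = 0 then 1 + c*z else if n = 1 then c else 0)"
proof (induction n)
  case 0 then show ?case by simp
next
  case (Suc n)
  show ?case
  proof (cases "n = 0")
    case True
    have "deriv (\<lambda>w. 1 + c*w) z = c" for z
      by (rule DERIV_imp_deriv) (auto intro!: derivative_eq_intros)
    then show ?thesis using True by (auto simp: fun_eq_iff)
  next
    case False
    then show ?thesis unfolding funpow.simps(2) o_def Suc.IH by (auto simp: fun_eq_iff)
  qed
qed

lemma higher_deriv_expc:
  "(deriv ^^ n) (\<lambda>w. exp (c*w)) = (\<lambda>z. c^n * exp (c*z))"
proof (induction n)
  case 0 then show ?case by simp
next
  case (Suc n)
  have "deriv (\<lambda>z. c^n * exp (c*z)) z = c^Suc n * exp (c*z)" for z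
    by (rule DERIV_imp_deriv) (auto intro!: derivative_eq_intros simp: algebra_simps)
  then show ?case unfolding funpow.simps(2) o_def Suc.IH by (auto simp: fun_eq_iff)
qed

lemma nn_lin1: "(c::real) \<ge> 0 \<Longrightarrow> nn (\<lambda>z. 1 + of_real c * z)"
  by (auto simp: nn_def higher_deriv_lin1 intro!: holomorphic_intros)

lemma nn_expc: "(c::real) \<ge> 0 \<Longrightarrow> nn (\<lambda>z. exp (of_real c * z))"
  by (auto simp: nn_def higher_deriv_expc simp flip: of_real_power intro!: holomorphic_intros)

lemma cle_1_lin1: "(c::real) \<ge> 0 \<Longrightarrow> cle (\<lambda>z. 1) (\<lambda>z. 1 + of_real c * z)"
  by (auto simp: cle_def higher_deriv_lin1)

lemma cle_lin1_expc: "(c::real) \<ge> 0 \<Longrightarrow> cle (\<lambda>z. 1 + of_real c * z) (\<lambda>z. exp (of_real c * z))"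
  by (auto simp: cle_def higher_deriv_lin1 higher_deriv_expc simp flip: of_real_power)

lemma nn_power: "nn f \<Longrightarrow> nn (\<lambda>z. f z ^ n)"
  by (induction n) (auto intro: nn_mult[of f] nn_const)

lemma cle_power: "nn f \<Longrightarrow> nn g \<Longrightarrow> cle f g \<Longrightarrow> cle (\<lambda>z. f z ^ n) (\<lambda>z. g z ^ n)"
  by (induction n) (auto intro!: cle_mult nn_power simp: cle_refl)

lemma nn_prod: "(\<And>j. j \<in> A \<Longrightarrow> nn (f j)) \<Longrightarrow> nn (\<lambda>z. \<Prod>j\<in>A. f j z)"
proof (induction A rule: infinite_finite_induct)
  case (infinite A) then show ?case by (simp add: nn_const)
next
  case empty then show ?case by (simp add: nn_const)
next
  case (insert x F)
  then show ?case by (simp add: nn_mult)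
qed

lemma nn_diff:
  assumes "nn f" "nn g" "cle f g" shows "nn (\<lambda>z. g z - f z)"
proof -
  have h: "f holomorphic_on UNIV" "g holomorphic_on UNIV" using assms by (auto simp: nn_def)
  have "0 \<le> Dk k (\<lambda>z. g z - f z)" for k
    unfolding higher_deriv_diff[OF h(2,1) open_UNIV UNIV_I]
    using assms(3) by (auto simp: cle_def)
  then show ?thesis using h by (auto simp: nn_def intro!: holomorphic_intros)
qed

lemma nn_bound:
  assumes "nn d" "norm z \<le> 1"
  shows "norm (d z) \<le> Re (d 1)" "Im (d 1) = 0"
proof -
  have hol: "d holomorphic_on ball 0 2" using assms(1) by (auto simp: nn_def)
  define r where "r n = Re (Dk n d) / fact n" for n
  have Dn: "0 \<le> Dk n d" for n using assms(1) by (auto simp: nn_def)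
  have a: "Dk n d / fact n = of_real (r n)" for n
  proof -
    have e: "Dk n d = of_real (Re (Dk n d))" using Dn[of n] by (auto simp: less_eq_complex_def complex_eq_iff)
    show ?thesis by (subst e) (simp add: r_def)
  qed
  have r0: "r n \<ge> 0" for n using Dn[of n] by (auto simp: r_def less_eq_complex_def)
  have s1: "(\<lambda>n. of_real (r n) * z ^ n) sums d z"
    using holomorphic_power_series[OF hol, of z] assms(2) by (simp add: a)
  have s2: "(\<lambda>n. complex_of_real (r n)) sums d 1"
    using holomorphic_power_series[OF hol, of 1] by (simp add: a)
  have sr: "r sums Re (d 1)" using sums_Re[OF s2] by simp
  have "(\<lambda>n. 0) sums Im (d 1)" using sums_Im[OF s2] by simp
  then show "Im (d 1) = 0" using sums_unique2 sums_zero by blast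
  have nb: "norm (of_real (r n) * z ^ n) \<le> r n" for n
  proof -
    have "norm (of_real (r n) * z ^ n) = r n * norm z ^ n" using r0[of n] by (simp add: norm_mult norm_power)
    also have "\<dots> \<le> r n * 1" using r0[of n] assms(2) by (intro mult_left_mono power_le_one) auto
    finally show ?thesis by simp
  qed
  have sn: "summable (\<lambda>n. norm (of_real (r n) * z ^ n))"
    by (rule summable_comparison_test[of _ r]) (use nb sums_summable[OF sr] in auto)
  have "norm (d z) = norm (\<Sum>n. of_real (r n) * z ^ n)" using sums_unique[OF s1] by simp
  also have "\<dots> \<le> (\<Sum>n. norm (of_real (r n) * z ^ n))" by (rule summable_norm[OF sn])
  also have "\<dots> \<le> (\<Sum>n. r n)" by (rule suminf_le[OF nb sn sums_summable[OF sr]])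
  also have "\<dots> = Re (d 1)" using sums_unique[OF sr] by simp
  finally show "norm (d z) \<le> Re (d 1)" .
qed



lemma cauchy_unit:
  assumes "d holomorphic_on UNIV" "\<And>z. norm z \<le> 1 \<Longrightarrow> norm (d z) \<le> B"
  shows "norm (Dk k d) \<le> fact k * B"
proof -
  have "norm (Dk k d) \<le> fact k * B / 1 ^ k"
  proof (rule Cauchy_inequality[of d 0 1])
    show "d holomorphic_on ball 0 1" using holomorphic_on_subset[OF assms(1)] by blast
    show "continuous_on (cball 0 1) d"
      using holomorphic_on_imp_continuous_on[OF holomorphic_on_subset[OF assms(1)]] by blast
    show "\<And>x. norm (0 - x) = 1 \<Longrightarrow> norm (d x) \<le> B" using assms(2) by simp
  qed simp
  then show ?thesis by simp
qed

lemma cle_mono_chain: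
  assumes "\<And>n. cle (G n) (G (Suc n))" "n \<le> m" shows "cle (G n) (G m)"
  using assms(2)
proof (induction m rule: dec_induct)
  case base then show ?case by (rule cle_refl)
next
  case (step m) then show ?case using assms(1) cle_trans by blast
qed

lemma mono_limit:
  assumes nnG: "\<And>n. nn (G n)" and mono: "\<And>n. cle (G n) (G (Suc n))"
    and lim: "\<And>z. (\<lambda>n. G n z) \<longlonglongrightarrow> F z" and holF: "F holomorphic_on UNIV"
  shows "nn F" "\<And>n. cle (G n) F"
proof -
  have holG: "G n holomorphic_on UNIV" for n using nnG by (auto simp: nn_def)
  have bnd: "norm (F z - G n z) \<le> Re (F 1) - Re (G n 1)" if z: "norm z \<le> 1" for n z
  proof -
    have "\<forall>m\<ge>n. norm (G m z - G n z) \<le> Re (G m 1) - Re (G n 1)"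
    proof (intro allI impI)
      fix m assume "n \<le> m"
      then have "nn (\<lambda>z. G m z - G n z)" by (rule nn_diff[OF nnG nnG cle_mono_chain[of G, OF mono]])
      from nn_bound(1)[OF this z] show "norm (G m z - G n z) \<le> Re (G m 1) - Re (G n 1)" by simp
    qed
    moreover have t1: "(\<lambda>m. norm (G m z - G n z)) \<longlonglongrightarrow> norm (F z - G n z)" by (intro tendsto_intros lim)
    moreover have t2: "(\<lambda>m. Re (G m 1) - Re (G n 1)) \<longlonglongrightarrow> Re (F 1) - Re (G n 1)" by (intro tendsto_intros lim)
    ultimately show ?thesis using LIMSEQ_le[OF t1 t2] by blast
  qed
  have conv: "(\<lambda>n. Dk k (G n)) \<longlonglongrightarrow> Dk k F" for k
  proof -
    have nb: "norm (Dk k F - Dk k (G n)) \<le> fact k * (Re (F 1) - Re (G n 1))" for n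
    proof -
      have d: "Dk k (\<lambda>z. F z - G n z) = Dk k F - Dk k (G n)"
        by (rule higher_deriv_diff[OF holF holG open_UNIV UNIV_I])
      have "norm (Dk k (\<lambda>z. F z - G n z)) \<le> fact k * (Re (F 1) - Re (G n 1))"
        by (rule cauchy_unit[OF holomorphic_on_diff[OF holF holG] bnd])
      then show ?thesis by (simp only: d)
    qed
    have "(\<lambda>n. fact k * (Re (F 1) - Re (G n 1))) \<longlonglongrightarrow> fact k * (Re (F 1) - Re (F 1))"
      by (intro tendsto_intros lim)
    then have t0: "(\<lambda>n. fact k * (Re (F 1) - Re (G n 1))) \<longlonglongrightarrow> 0" by simp
    have "(\<lambda>n. Dk k F - Dk k (G n)) \<longlonglongrightarrow> 0"
      by (rule Lim_null_comparison[OF always_eventually t0]) (use nb in blast)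
    then have "(\<lambda>n. Dk k F - (Dk k F - Dk k (G n))) \<longlonglongrightarrow> Dk k F - 0"
      by (intro tendsto_diff tendsto_const)
    then show ?thesis by simp
  qed
  have le: "Dk k (G n) \<le> Dk k F" for k n
  proof -
    have im: "Im (Dk k (G m)) = 0" for m using nnG[of m] by (auto simp: nn_def less_eq_complex_def)
    have "(\<lambda>m. Im (Dk k (G m))) \<longlonglongrightarrow> Im (Dk k F)" by (intro tendsto_intros conv)
    then have "(\<lambda>m. 0) \<longlonglongrightarrow> Im (Dk k F)" by (simp only: im)
    then have imF: "Im (Dk k F) = 0" using LIMSEQ_unique[OF tendsto_const] by metis
    have "incseq (\<lambda>m. Re (Dk k (G m)))"
      by (rule incseq_SucI) (use mono in \<open>auto simp: cle_def less_eq_complex_def\<close>)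
    then have "Re (Dk k (G n)) \<le> Re (Dk k F)"
      by (rule incseq_le) (intro tendsto_intros conv)
    then show ?thesis using im imF by (auto simp: less_eq_complex_def)
  qed
  then show "\<And>n. cle (G n) F" by (auto simp: cle_def)
  have "0 \<le> Dk k F" for k
    using nnG[of 0] le[of k 0] unfolding nn_def by (meson order_trans)
  then show "nn F" using holF by (simp add: nn_def)
qed


lemma coeff_conv:
  assumes nnQ: "\<And>n. nn (Q n)" and cQ: "\<And>n. cle (Q n) F" and nnF: "nn F"
    and lim1: "(\<lambda>n. Q n 1) \<longlonglongrightarrow> F 1"
  shows "(\<lambda>n. Dk k (Q n)) \<longlonglongrightarrow> Dk k F"
proof -
  have holG: "Q n holomorphic_on UNIV" for n using nnQ by (auto simp: nn_def)
  have holF: "F holomorphic_on UNIV" using nnF by (auto simp: nn_def)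
  have nb: "norm (Dk k F - Dk k (Q n)) \<le> fact k * (Re (F 1) - Re (Q n 1))" for n
  proof -
    have d: "Dk k (\<lambda>z. F z - Q n z) = Dk k F - Dk k (Q n)"
      by (rule higher_deriv_diff[OF holF holG open_UNIV UNIV_I])
    have nd: "nn (\<lambda>z. F z - Q n z)" by (rule nn_diff[OF nnQ nnF cQ])
    have "norm (Dk k (\<lambda>z. F z - Q n z)) \<le> fact k * Re (F 1 - Q n 1)"
      by (rule cauchy_unit[OF holomorphic_on_diff[OF holF holG] nn_bound(1)[OF nd]])
    then show ?thesis by (simp only: d minus_complex.sel)
  qed
  have "(\<lambda>n. fact k * (Re (F 1) - Re (Q n 1))) \<longlonglongrightarrow> fact k * (Re (F 1) - Re (F 1))"
    by (intro tendsto_intros lim1)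
  then have t0: "(\<lambda>n. fact k * (Re (F 1) - Re (Q n 1))) \<longlonglongrightarrow> 0" by simp
  have "(\<lambda>n. Dk k F - Dk k (Q n)) \<longlonglongrightarrow> 0"
    by (rule Lim_null_comparison[OF always_eventually t0]) (use nb in blast)
  then have "(\<lambda>n. Dk k F - (Dk k F - Dk k (Q n))) \<longlonglongrightarrow> Dk k F - 0"
    by (intro tendsto_diff tendsto_const)
  then show ?thesis by simp
qed



lemma prod_beta_list:
  fixes ys :: "real list" and g :: "real \<Rightarrow> complex"
  assumes "g 0 = 1" "length ys \<le> n"
  shows "(\<Prod>j<n. g (if j < length ys then ys ! j else 0)) = (\<Prod>x\<leftarrow>ys. g x)"
  using assms(2)
proof (induction n rule: dec_induct)
  case base
  have "(\<Prod>x\<leftarrow>ys. g x) = (\<Prod>j = 0..<length ys. g (ys ! j))"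
    by (subst prod.list_conv_set_nth) (auto intro: prod.cong)
  then show ?case by (simp add: atLeast0LessThan)
next
  case (step m) then show ?case using assms(1) by simp
qed

lemma in_L_plus_list:
  fixes xs :: "real list"
  assumes nonneg: "\<forall>x\<in>set xs. x \<ge> 0"
  shows "(\<lambda>z. C * z ^ l * (\<Prod>x\<leftarrow>xs. 1 + of_real x * z)) \<in> L_plus"
proof -
  define ys where "ys = rev (sort xs)"
  define L where "L = length ys"
  define \<beta> where "\<beta> j = (if j < L then ys ! j else 0)" for j
  have setys: "set ys = set xs" by (simp add: ys_def)
  have b0: "\<beta> j \<ge> 0" for j
  proof (cases "j < L")
    case True
    then have "ys ! j \<in> set xs" using nth_mem[of j ys] setys unfolding L_def by blast
    then show ?thesis using nonneg True unfolding \<beta>_def by simp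
  qed (simp add: \<beta>_def)
  have mono: "\<beta> (Suc j) \<le> \<beta> j" for j
  proof (cases "Suc j < L")
    case True
    have s: "sorted (sort xs)" by simp
    have Ls: "L = length (sort xs)" by (simp add: L_def ys_def)
    have yn: "ys ! i = sort xs ! (L - Suc i)" if "i < L" for i
      using that unfolding ys_def L_def by (simp add: rev_nth)
    have "sort xs ! (L - Suc (Suc j)) \<le> sort xs ! (L - Suc j)"
      by (rule sorted_nth_mono[OF s]) (use True Ls in linarith)+
    then have "ys ! Suc j \<le> ys ! j" using yn[of j] yn[of "Suc j"] True by simp
    moreover have "\<beta> (Suc j) = ys ! Suc j" "\<beta> j = ys ! j" using True unfolding \<beta>_def by auto
    ultimately show ?thesis by simp
  next
    case False
    then have "\<beta> (Suc j) = 0" unfolding \<beta>_def by simp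
    then show ?thesis using b0[of j] by simp
  qed
  have summ: "summable \<beta>" by (rule summable_finite[of "{..<L}"]) (auto simp: \<beta>_def)
  have permu: "(\<Prod>x\<leftarrow>ys. 1 + complex_of_real x * z) = (\<Prod>x\<leftarrow>xs. 1 + complex_of_real x * z)" for z
  proof -
    have m: "mset ys = mset xs" by (simp add: ys_def)
    show ?thesis by (metis m mset_map prod_mset_prod_list)
  qed
  have lim: "(\<lambda>n. C * z ^ l * exp (complex_of_real 0 * z) * (\<Prod>j<n. 1 + complex_of_real (\<beta> j) * z))
      \<longlonglongrightarrow> C * z ^ l * (\<Prod>x\<leftarrow>xs. 1 + of_real x * z)" for z
  proof (rule tendsto_eventually, rule eventually_sequentiallyI[of L])
    fix n assume "L \<le> n"
    then have "(\<Prod>j<n. 1 + complex_of_real (\<beta> j) * z) = (\<Prod>x\<leftarrow>ys. 1 + complex_of_real x * z)"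
      unfolding \<beta>_def L_def by (intro prod_beta_list) auto
    then show "C * z ^ l * exp (complex_of_real 0 * z) * (\<Prod>j<n. 1 + complex_of_real (\<beta> j) * z)
       = C * z ^ l * (\<Prod>x\<leftarrow>xs. 1 + of_real x * z)" by (simp add: permu)
  qed
  show ?thesis unfolding L_plus_def
    by (intro CollectI exI[of _ C] exI[of _ l] exI[of _ "0::real"] exI[of _ \<beta>] conjI allI lim mono b0 summ) simp
qed

lemma poly_prod_lin:
  "poly (\<Prod>x\<leftarrow>xs. [:1, complex_of_real x:]) z = (\<Prod>x\<leftarrow>xs. 1 + of_real x * z)"
  by (induction xs) (auto simp: algebra_simps)

lemma in_P_plus_list:
  fixes xs :: "real list"
  assumes nonneg: "\<forall>x\<in>set xs. x \<ge> 0"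
  shows "(\<lambda>z. C * z ^ l * (\<Prod>x\<leftarrow>xs. 1 + of_real x * z)) \<in> P_plus"
proof -
  define p where "p = smult C (monom 1 l * (\<Prod>x\<leftarrow>xs. [:1, complex_of_real x:]))"
  have "poly p z = C * z ^ l * (\<Prod>x\<leftarrow>xs. 1 + of_real x * z)" for z
    by (simp add: p_def poly_monom poly_prod_lin)
  then have "(\<lambda>z. C * z ^ l * (\<Prod>x\<leftarrow>xs. 1 + of_real x * z)) = poly p" by auto
  then show ?thesis using in_L_plus_list[OF assms] unfolding P_plus_def by blast
qed



lemma seminorm_bound:
  assumes "seminorm_b b f < \<infinity>"
  obtains M where "\<And>k. norm (Dk k f) / b ^ k \<le> M"
proof -
  define S where "S = seminorm_b b f"
  have up: "ereal (norm (Dk k f) / b ^ k) \<le> S" for k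
    unfolding S_def seminorm_b_def by (rule SUP_upper) simp
  show ?thesis
  proof (cases S)
    case (real r)
    then show ?thesis using up by (intro that[of r]) simp
  next
    case PInf then show ?thesis using assms S_def by simp
  next
    case MInf then show ?thesis using up[of 0] by simp
  qed
qed

lemma seminorm_le:
  assumes "\<And>k. norm (Dk k g) / b ^ k \<le> c"
  shows "seminorm_b b g \<le> ereal c"
  unfolding seminorm_b_def by (rule SUP_least) (use assms in simp)

lemma cnorm_sub_le:
  fixes x y :: complex
  assumes "0 \<le> x" "x \<le> y" shows "norm (x - y) \<le> norm y"
proof -
  have "Im x = 0" "Im y = 0" "0 \<le> Re x" "Re x \<le> Re y" using assms by (auto simp: less_eq_complex_def)
  then show ?thesis by (simp add: cmod_def)
qed

lemma prod_upt_lessThan: "(\<Prod>j\<leftarrow>[0..<n]. h j) = (\<Prod>j<n. h j)"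
  by (induction n) (auto simp: lessThan_Suc mult.commute)



lemma core:
  fixes \<alpha> :: real and \<beta> :: "nat \<Rightarrow> real" and F :: "complex \<Rightarrow> complex" and C :: complex
  assumes a0: "\<alpha> \<ge> 0" and b0: "\<And>j. \<beta> j \<ge> 0"
    and limG: "\<And>z. (\<lambda>n. z ^ l * exp (of_real \<alpha> * z) * (\<Prod>j<n. 1 + of_real (\<beta> j) * z)) \<longlonglongrightarrow> F z"
    and holF: "F holomorphic_on UNIV"
  shows "\<exists>Q. (\<forall>n. (\<lambda>z. C * Q n z) \<in> P_plus \<and> nn (Q n) \<and> cle (Q n) F) \<and> nn F
             \<and> (\<forall>k. (\<lambda>n. Dk k (Q n)) \<longlonglongrightarrow> Dk k F)"
proof -
  define G where "G n = (\<lambda>z::complex. z ^ l * exp (of_real \<alpha> * z) * (\<Prod>j<n. 1 + of_real (\<beta> j) * z))" for n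
  define c where "c n = \<alpha> / real (Suc n)" for n
  have c0: "c n \<ge> 0" for n using a0 by (simp add: c_def)
  define Q where "Q n = (\<lambda>z::complex. z ^ l * (1 + of_real (c n) * z) ^ Suc n * (\<Prod>j<n. 1 + of_real (\<beta> j) * z))" for n
  have nnP: "nn (\<lambda>z. \<Prod>j<n. 1 + of_real (\<beta> j) * z)" for n
    by (rule nn_prod) (rule nn_lin1[OF b0])
  have nnZ: "nn (\<lambda>z. z ^ l)" using nn_power[OF nn_ident] by simp
  have nnG: "nn (G n)" for n
    unfolding G_def by (intro nn_mult nnP nnZ nn_expc a0)
  have nnQ: "nn (Q n)" for n
    unfolding Q_def by (intro nn_mult nnP nnZ nn_power nn_lin1 c0)
  have monoG: "cle (G n) (G (Suc n))" for n
  proof -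
    have "cle (\<lambda>z. G n z * 1) (\<lambda>z. G n z * (1 + of_real (\<beta> n) * z))"
      by (rule cle_mult[OF nnG nn_const nnG nn_lin1 cle_refl cle_1_lin1]) (auto simp: b0)
    moreover have "(\<lambda>z. G n z * 1) = G n" by simp
    moreover have "(\<lambda>z. G n z * (1 + of_real (\<beta> n) * z)) = G (Suc n)"
      by (simp add: G_def lessThan_Suc mult_ac)
    ultimately show ?thesis by simp
  qed
  have limG': "(\<lambda>n. G n z) \<longlonglongrightarrow> F z" for z unfolding G_def using limG by simp
  have nnF: "nn F" and cGF: "\<And>n. cle (G n) F"
    using mono_limit[OF nnG monoG limG' holF] by auto
  have cQG: "cle (Q n) (G n)" for n
  proof -
    have e: "(\<lambda>z::complex. exp (of_real (c n) * z) ^ Suc n) = (\<lambda>z. exp (of_real \<alpha> * z))"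
    proof
      fix z :: complex
      have "exp (of_real (c n) * z) ^ Suc n = exp (of_nat (Suc n) * (of_real (c n) * z))"
        by (rule exp_of_nat_mult[symmetric])
      also have "of_nat (Suc n) * (of_real (c n) * z) = of_real (real (Suc n) * c n) * z"
        by (simp only: of_real_mult of_real_of_nat_eq mult.assoc)
      also have "real (Suc n) * c n = \<alpha>" by (simp add: c_def)
      finally show "exp (of_real (c n) * z) ^ Suc n = exp (of_real \<alpha> * z)" .
    qed
    have c1: "cle (\<lambda>z. (1 + of_real (c n) * z) ^ Suc n) (\<lambda>z. exp (of_real (c n) * z) ^ Suc n)"
      by (rule cle_power[OF nn_lin1[OF c0] nn_expc[OF c0] cle_lin1_expc[OF c0]])
    have c2: "cle (\<lambda>z. (1 + of_real (c n) * z) ^ Suc n) (\<lambda>z. exp (of_real \<alpha> * z))"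
      using c1 e by simp
    have c3: "cle (\<lambda>z. z ^ l * (1 + of_real (c n) * z) ^ Suc n) (\<lambda>z. z ^ l * exp (of_real \<alpha> * z))"
      by (rule cle_mult[OF nnZ _ nnZ _ cle_refl c2]) (intro nn_power nn_lin1 c0, intro nn_expc a0)
    show ?thesis unfolding Q_def G_def
      by (rule cle_mult[OF _ nnP _ nnP c3 cle_refl]) (intro nn_mult nnZ nn_power nn_lin1 c0 nn_expc a0)+
  qed
  have cQF: "cle (Q n) F" for n using cle_trans[OF cQG cGF] .
  define P where "P n = (\<Prod>j<n. 1 + complex_of_real (\<beta> j))" for n
  have G1: "G n 1 = exp (of_real \<alpha>) * P n" for n by (simp add: G_def P_def)
  have Q1: "Q n 1 = of_real ((1 + \<alpha> / real (Suc n)) ^ Suc n) * P n" for n by (simp add: Q_def P_def c_def)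
  have "(\<lambda>n. G n 1 / exp (of_real \<alpha>)) \<longlonglongrightarrow> F 1 / exp (of_real \<alpha>)"
    by (intro tendsto_intros limG') simp
  then have limP: "P \<longlonglongrightarrow> F 1 / exp (of_real \<alpha>)" by (simp add: G1)
  have "(\<lambda>n. (1 + \<alpha> / real n) ^ n) \<longlonglongrightarrow> exp \<alpha>" by (rule tendsto_exp_limit_sequentially)
  then have "(\<lambda>n. (1 + \<alpha> / real (Suc n)) ^ Suc n) \<longlonglongrightarrow> exp \<alpha>" by (rule LIMSEQ_Suc)
  then have "(\<lambda>n. of_real ((1 + \<alpha> / real (Suc n)) ^ Suc n) * P n) \<longlonglongrightarrow> of_real (exp \<alpha>) * (F 1 / exp (of_real \<alpha>))"
    by (intro tendsto_intros limP)
  then have limQ1: "(\<lambda>n. Q n 1) \<longlonglongrightarrow> F 1" by (simp add: Q1 exp_of_real)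
  have conv: "(\<lambda>n. Dk k (Q n)) \<longlonglongrightarrow> Dk k F" for k
    by (rule coeff_conv[OF nnQ cQF nnF limQ1])
  have inP: "(\<lambda>z. C * Q n z) \<in> P_plus" for n
  proof -
    define xs where "xs = replicate (Suc n) (c n) @ map \<beta> [0..<n]"
    have xs0: "\<forall>x\<in>set xs. x \<ge> 0" using c0 b0 by (auto simp: xs_def)
    have "C * z ^ l * (\<Prod>x\<leftarrow>xs. 1 + of_real x * z) = C * Q n z" for z
    proof -
      have "(\<Prod>x\<leftarrow>xs. 1 + of_real x * z) = (1 + of_real (c n) * z) ^ Suc n * (\<Prod>j<n. 1 + of_real (\<beta> j) * z)"
        by (simp add: xs_def o_def prod_upt_lessThan)
      then show ?thesis by (simp add: Q_def mult_ac)
    qed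
    then have "(\<lambda>z. C * z ^ l * (\<Prod>x\<leftarrow>xs. 1 + of_real x * z)) = (\<lambda>z. C * Q n z)" by auto
    then show ?thesis using in_P_plus_list[OF xs0, of C l] by simp
  qed
  show ?thesis using inP nnQ cQF nnF conv by blast
qed



lemma seminorm_zero: "\<epsilon> > 0 \<Longrightarrow> seminorm_b b (\<lambda>z. 0) < ereal \<epsilon>"
proof -
  assume e: "\<epsilon> > 0"
  have "seminorm_b b (\<lambda>z. 0) \<le> ereal 0" by (rule seminorm_le) simp
  also have "\<dots> < ereal \<epsilon>" using e by simp
  finally show ?thesis .
qed

lemma zero_in_P_plus: "(\<lambda>z. 0) \<in> P_plus"
proof -
  have "(\<lambda>z. (0::complex) * z ^ 0 * (\<Prod>x\<leftarrow>[]. 1 + of_real x * z)) \<in> P_plus"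
    by (rule in_P_plus_list) simp
  then show ?thesis by simp
qed

theorem corollary1p5:
  fixes a :: real
  assumes "a \<ge> 0"
  shows "\<forall>f \<in> L_plus_a a. \<forall>B \<epsilon>. finite B \<and> B \<subseteq> {b. b > a} \<and> \<epsilon> > 0 \<longrightarrow>
           (\<exists>p \<in> P_plus. \<forall>b \<in> B. seminorm_b b (\<lambda>z. p z - f z) < ereal \<epsilon>)"
proof (intro ballI allI impI)
  fix f B and \<epsilon> :: real
  assume fL: "f \<in> L_plus_a a" and hB: "finite B \<and> B \<subseteq> {b. b > a} \<and> \<epsilon> > 0"
  have finB: "finite B" and Bsub: "\<And>b. b \<in> B \<Longrightarrow> b > a" and eps: "\<epsilon> > 0" using hB by auto
  have fLp: "f \<in> L_plus" and fA: "f \<in> A_space a" using fL by (auto simp: L_plus_a_def)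
  have holf: "f holomorphic_on UNIV" and fin: "\<And>b. b > a \<Longrightarrow> seminorm_b b f < \<infinity>"
    using fA by (auto simp: A_space_def)
  obtain C l \<alpha> \<beta> where a0: "\<alpha> \<ge> 0" and b0: "\<And>j. \<beta> j \<ge> 0"
    and limf: "\<And>z. (\<lambda>n. C * z ^ l * exp (complex_of_real \<alpha> * z) *
               (\<Prod>j<n. 1 + complex_of_real (\<beta> j) * z)) \<longlonglongrightarrow> f z"
    using fLp unfolding L_plus_def by blast
  show "\<exists>p\<in>P_plus. \<forall>b\<in>B. seminorm_b b (\<lambda>z. p z - f z) < ereal \<epsilon>"
  proof (cases "B = {}")
    case True
    then show ?thesis using zero_in_P_plus by blast
  next
    case Bne: False
    show ?thesis
    proof (cases "C = 0")
      case True
      have f0: "f z = 0" for z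
      proof -
        have "(\<lambda>n. 0) \<longlonglongrightarrow> f z" using limf[of z] True by simp
        then show ?thesis using LIMSEQ_unique[OF tendsto_const] by metis
      qed
      have "(\<lambda>z. 0 - f z) = (\<lambda>z. 0)" using f0 by simp
      then have "\<forall>b\<in>B. seminorm_b b (\<lambda>z. 0 - f z) < ereal \<epsilon>" using seminorm_zero[OF eps] by simp
      then show ?thesis using zero_in_P_plus by (rule bexI[where x="\<lambda>z. 0"])
    next
      case Cne: False
      define bm where "bm = Min B"
      have bmB: "bm \<in> B" using Min_in[OF finB Bne] by (simp add: bm_def)
      have bmle: "\<And>b. b \<in> B \<Longrightarrow> bm \<le> b" using Min_le[OF finB] by (simp add: bm_def)
      have abm: "a < bm" using Bsub[OF bmB] .
      define b1 where "b1 = (a + bm) / 2"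
      have ab1: "a < b1" and b1bm: "b1 < bm" using abm by (auto simp: b1_def)
      have b1pos: "b1 > 0" using ab1 assms by simp
      obtain M where M: "\<And>k. norm (Dk k f) / b1 ^ k \<le> M" using seminorm_bound[OF fin[OF ab1]] by blast
      have "norm (f 0) \<le> M" using M[of 0] by simp
      then have M0: "M \<ge> 0" using norm_ge_zero[of "f 0"] by linarith
      define F where "F z = f z / C" for z
      have holF: "F holomorphic_on UNIV" unfolding F_def using holf by (intro holomorphic_intros) auto
      have limG: "(\<lambda>n. z ^ l * exp (of_real \<alpha> * z) * (\<Prod>j<n. 1 + of_real (\<beta> j) * z)) \<longlonglongrightarrow> F z" for z
      proof -
        have "(\<lambda>n. (C * z ^ l * exp (complex_of_real \<alpha> * z) *
               (\<Prod>j<n. 1 + complex_of_real (\<beta> j) * z)) / C) \<longlonglongrightarrow> f z / C"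
          by (intro tendsto_divide limf tendsto_const Cne)
        then show ?thesis using Cne by (simp add: F_def mult.assoc)
      qed
      obtain Q where hQ: "\<And>n. (\<lambda>z. C * Q n z) \<in> P_plus" "\<And>n. nn (Q n)" "\<And>n. cle (Q n) F"
        and nnF: "nn F" and conv: "\<And>k. (\<lambda>n. Dk k (Q n)) \<longlonglongrightarrow> Dk k F"
        using core[OF a0 b0 limG holF, of C] by blast
      have holQ: "Q n holomorphic_on UNIV" for n using hQ(2) by (simp add: nn_def)
      have fC: "f = (\<lambda>z. C * F z)" using Cne by (auto simp: F_def)
      have Dkf: "Dk k f = C * Dk k F" for k
        by (subst fC) (rule higher_deriv_cmult[OF holF UNIV_I open_UNIV])
      have Dkd: "Dk k (\<lambda>z. C * Q n z - f z) = C * (Dk k (Q n) - Dk k F)" for k n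
      proof -
        have "Dk k (\<lambda>z. C * Q n z - f z) = Dk k (\<lambda>z. C * Q n z) - Dk k f"
          by (rule higher_deriv_diff[OF _ holf open_UNIV UNIV_I]) (intro holomorphic_intros holQ)
        also have "Dk k (\<lambda>z. C * Q n z) = C * Dk k (Q n)"
          by (rule higher_deriv_cmult[OF holQ UNIV_I open_UNIV])
        finally show ?thesis by (simp add: Dkf algebra_simps)
      qed
      have normd: "norm (Dk k (\<lambda>z. C * Q n z - f z)) \<le> norm (Dk k f)" for k n
      proof -
        have "0 \<le> Dk k (Q n)" using hQ(2) by (simp add: nn_def)
        moreover have "Dk k (Q n) \<le> Dk k F" using hQ(3) by (simp add: cle_def)
        ultimately have "norm (Dk k (Q n) - Dk k F) \<le> norm (Dk k F)" by (rule cnorm_sub_le)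
        then have "norm C * norm (Dk k (Q n) - Dk k F) \<le> norm C * norm (Dk k F)"
          by (rule mult_left_mono) simp
        then show ?thesis by (simp add: Dkd Dkf norm_mult)
      qed
      define r where "r = b1 / bm"
      have r0: "0 < r" and r1: "r < 1" using b1pos b1bm by (auto simp: r_def)
      have "(\<lambda>k. M * r ^ k) \<longlonglongrightarrow> M * 0"
        by (intro tendsto_intros) (use r0 r1 in simp)
      then have "eventually (\<lambda>k. M * r ^ k < \<epsilon> / 2) sequentially"
        by (intro order_tendstoD(2)) (use eps in auto)
      then obtain K where K: "\<And>k. k \<ge> K \<Longrightarrow> M * r ^ k < \<epsilon> / 2"
        unfolding eventually_sequentially by blast
      have ev: "\<forall>k\<in>{..<K}. eventually (\<lambda>n. norm (Dk k (Q n) - Dk k F) < \<epsilon> / 2 * bm ^ k / norm C) sequentially"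
      proof
        fix k assume "k \<in> {..<K}"
        have "(\<lambda>n. Dk k (Q n) - Dk k F) \<longlonglongrightarrow> Dk k F - Dk k F" by (intro tendsto_intros conv)
        then have "(\<lambda>n. norm (Dk k (Q n) - Dk k F)) \<longlonglongrightarrow> 0"
          using tendsto_norm_zero by force
        moreover have "\<epsilon> / 2 * bm ^ k / norm C > 0" using eps abm assms Cne by simp
        ultimately show "eventually (\<lambda>n. norm (Dk k (Q n) - Dk k F) < \<epsilon> / 2 * bm ^ k / norm C) sequentially"
          by (rule order_tendstoD(2))
      qed
      have "eventually (\<lambda>n. \<forall>k\<in>{..<K}. norm (Dk k (Q n) - Dk k F) < \<epsilon> / 2 * bm ^ k / norm C) sequentially"
        by (rule eventually_ball_finite[OF _ ev]) simp
      then obtain N where N: "\<And>k. k < K \<Longrightarrow> norm (Dk k (Q N) - Dk k F) < \<epsilon> / 2 * bm ^ k / norm C"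
        unfolding eventually_sequentially by blast
      have est: "norm (Dk k (\<lambda>z. C * Q N z - f z)) / b ^ k \<le> \<epsilon> / 2" if bB: "b \<in> B" for b k
      proof -
        have bmb: "bm \<le> b" using bmle[OF bB] .
        have bpos: "b > 0" using bmb abm assms by simp
        have bmpos: "bm > 0" using abm assms by simp
        show ?thesis
        proof (cases "k \<ge> K")
          case True
          have "norm (Dk k (\<lambda>z. C * Q N z - f z)) / b ^ k \<le> norm (Dk k f) / b ^ k"
            by (rule divide_right_mono[OF normd]) (use bpos in simp)
          also have "norm (Dk k f) / b ^ k = (norm (Dk k f) / b1 ^ k) * (b1 / b) ^ k"
            using bpos b1pos by (simp add: power_divide field_simps)
          also have "\<dots> \<le> M * (b1 / b) ^ k"
            by (rule mult_right_mono[OF M]) (use b1pos bpos in simp)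
          also have "\<dots> \<le> M * r ^ k"
          proof (rule mult_left_mono[OF _ M0], rule power_mono)
            show "b1 / b \<le> r" unfolding r_def
              by (rule divide_left_mono) (use bmb b1pos bmpos in auto)
          qed (use b1pos bpos in simp)
          also have "\<dots> < \<epsilon> / 2" using K[OF True] .
          finally show ?thesis by simp
        next
          case False
          then have kK: "k < K" by simp
          have "norm (Dk k (\<lambda>z. C * Q N z - f z)) / b ^ k = norm C * norm (Dk k (Q N) - Dk k F) / b ^ k"
            by (simp add: Dkd norm_mult)
          also have "\<dots> \<le> norm C * norm (Dk k (Q N) - Dk k F) / bm ^ k"
            by (rule divide_left_mono) (use bmb bmpos in \<open>auto intro: power_mono mult_pos_pos\<close>)
          also have "\<dots> \<le> norm C * (\<epsilon> / 2 * bm ^ k / norm C) / bm ^ k"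
            by (intro divide_right_mono mult_left_mono less_imp_le[OF N[OF kK]]) (use bmpos in auto)
          also have "\<dots> = \<epsilon> / 2" using Cne bmpos by simp
          finally show ?thesis .
        qed
      qed
      have "\<forall>b\<in>B. seminorm_b b (\<lambda>z. C * Q N z - f z) < ereal \<epsilon>"
      proof
        fix b assume bB: "b \<in> B"
        have "seminorm_b b (\<lambda>z. C * Q N z - f z) \<le> ereal (\<epsilon> / 2)"
          by (rule seminorm_le) (rule est[OF bB])
        also have "\<dots> < ereal \<epsilon>" using eps by simp
        finally show "seminorm_b b (\<lambda>z. C * Q N z - f z) < ereal \<epsilon>" .
      qed
      then show ?thesis using hQ(1)[of N] by (rule bexI[where x="\<lambda>z. C * Q N z"])
    qed
  qed
qed

end
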